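(* In the setting of the linkage $\mathcal{L}$, for each case $k\in\{1,2,3\}$ of the classification below there is a planar map $\sigma_k$ of the $xz$-plane with $\sigma_k(A_0)=B_0$ and $\sigma_k(A_j)=B_j$: (1) If $L_j$ satisfies case 1 (i.e. $v_j=v_0=\pm\tfrac{u_0}{t_0}$ and $u_j=\tfrac{u_0t_j}{t_0}$, with $b$ on the compatible branch), then $\sigma_1$ is the central scaling with center $S_2$ mapping $S_1$ to $S_3$. (2) If $L_j$ satisfies case 2 (i.e. $v_0=\mp\tfrac{u_0}{t_0}$, $v_j=\mp\tfrac{u_0(s_0^2-t_0^2)}{t_0(s_j^2-t_j^2)}$, $u_j=\tfrac{\sqrt{t_0v_j(s_j^2t_0v_j\pm s_0^2u_0\mp t_0^2u_0)}}{t_0}$, with $b$ on the compatible branch), then $\sigma_2$ is the perspective collineation with center $S_2$ and axis the line orthogonal to $q$ through the midpoint $M$ of $S_1$ and $S_3$, mapping $S_1$ to $S_3$. (3) If $L_j$ satisfies case 3 (i.e. $v_j=v_0$, $u_j=\sqrt{s_j^2v_0^2-s_0^2v_0^2+u_0^2}$, $t_j=\sqrt{s_j^2-s_0^2+t_0^2}$), then with $\alpha$ and $\beta$ the lines orthogonal to $q$ through $A_0$ and $B_0$ respectively, $A_j\in\alpha$, $B_j\in\beta$, and $\sigma_3$ is the central perspectivity with center $S_2$ mapping points of $\alpha$ to points of $\beta$.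
   Context: Planar linkage $\mathcal{L}$ in the $xz$-plane: the $z$-axis is the line $q$; $S_2=(0,0,0)^T$, $S_1=(0,0,a)^T$ with $a>0$, $S_3=(0,0,b)^T$ with $b\neq0$, sliding along $q$. For each index $i\in\{0,\dots,p\}$ there are points $A_i=(d_i,0,z_i)^T$ and $B_i=v_iA_i$ ($v_i\neq 0$ fixed) with fixed lengths $s_i=\overline{S_2A_i}>0$, $t_i=\overline{S_1A_i}>0$, $u_i=\overline{S_3B_i}>0$, so that $d_i=\frac{\sqrt{2a^2s_i^2+2a^2t_i^2+2s_i^2t_i^2-a^4-s_i^4-t_i^4}}{2a}$, $z_i=\frac{a^2+s_i^2-t_i^2}{2a}$, and $b$ is determined from $\|B_0-S_3\|^2=u_0^2$ (two branches $b_\pm$; in cases 1 and 2 the branch is the one for which the linkage is mobile, depending on the sign of $z_0$ and of $v_0$). A central scaling is a homothety; a perspective collineation of the plane is a projective collineation fixing every point of a line (axis) and every line through a point (center). *)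

theory Defs
  imports "HOL-Analysis.Analysis"
begin

text \<open>Points of the xz-plane are represented as pairs (x, z) :: real \<times> real.
  The axis q is the z-axis {(0,z)}.\<close>

type_synonym pt = "real \<times> real"

definition dcoord :: "real \<Rightarrow> real \<Rightarrow> real \<Rightarrow> real" where
  "dcoord a s t = sqrt (2*a^2* s^2 + 2*a^2* t^2 + 2* s^2* t^2 - a^4 - s^4 - t^4) / (2*a)"

definition zcoord :: "real \<Rightarrow> real \<Rightarrow> real \<Rightarrow> real" where
  "zcoord a s t = (a^2 + s^2 - t^2) / (2*a)"

definition Apt :: "real \<Rightarrow> real \<Rightarrow> real \<Rightarrow> pt" where
  "Apt a s t = (dcoord a s t, zcoord a s t)"

definition Bpt :: "real \<Rightarrow> real \<Rightarrow> real \<Rightarrow> real \<Rightarrow> pt" where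
  "Bpt a s t v = v *\<^sub>R Apt a s t"

definition S1 :: "real \<Rightarrow> pt" where "S1 a = (0, a)"
definition S2 :: pt where "S2 = (0, 0)"
definition S3 :: "real \<Rightarrow> pt" where "S3 b = (0, b)"

text \<open>The two branches b_+ / b_- of the solution of ||B_0 - S_3||^2 = u_0^2,
  selected by a sign e = 1 or e = -1.\<close>
definition bbranch :: "real \<Rightarrow> real \<Rightarrow> real \<Rightarrow> real \<Rightarrow> real \<Rightarrow> real \<Rightarrow> real" where
  "bbranch a s0 t0 u0 v0 e =
     v0 * zcoord a s0 t0 + e * sqrt (u0^2 - v0^2 * (dcoord a s0 t0)^2)"

definition central_scaling :: "pt \<Rightarrow> real \<Rightarrow> pt \<Rightarrow> pt" where
  "central_scaling C r P = C + r *\<^sub>R (P - C)"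

text \<open>Projective plane via homogeneous coordinates in real^3; lines are
  nonzero covectors l, with X on l iff l \<bullet> X = 0.\<close>
definition hom :: "pt \<Rightarrow> real^3" where
  "hom P = vector [fst P, snd P, 1]"

definition coll_maps :: "real^3^3 \<Rightarrow> pt \<Rightarrow> pt \<Rightarrow> bool" where
  "coll_maps H P Q \<longleftrightarrow> (\<exists>c. c \<noteq> 0 \<and> H *v hom P = c *\<^sub>R hom Q)"

definition perspective_collineation :: "real^3^3 \<Rightarrow> real^3 \<Rightarrow> real^3 \<Rightarrow> bool" where
  "perspective_collineation H C l0 \<longleftrightarrow>
     invertible H \<and>
     (\<forall>X. X \<noteq> 0 \<and> l0 \<bullet> X = 0 \<longrightarrow> (\<exists>c. c \<noteq> 0 \<and> H *v X = c *\<^sub>R X)) \<and>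
     (\<forall>l. l \<noteq> 0 \<and> l \<bullet> C = 0 \<longrightarrow> (\<forall>X. l \<bullet> X = 0 \<longrightarrow> l \<bullet> (H *v X) = 0))"

definition hline :: "real \<Rightarrow> pt set" where
  "hline h = {P. snd P = h}"

definition central_perspectivity :: "pt \<Rightarrow> pt set \<Rightarrow> pt set \<Rightarrow> (pt \<Rightarrow> pt) \<Rightarrow> bool" where
  "central_perspectivity C \<alpha> \<beta> \<sigma> \<longleftrightarrow>
     bij_betw \<sigma> \<alpha> \<beta> \<and> (\<forall>P\<in>\<alpha>. collinear {C, P, \<sigma> P})"

end

theory Submission
  imports Defs
begin

lemma dz_identity:
  fixes a x y :: real
  assumes a: "a > 0" and tri: "2*a^2*x^2 + 2*a^2*y^2 + 2*x^2*y^2 - a^4 - x^4 - y^4 \<ge> 0"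
  shows "(dcoord a x y)^2 + (zcoord a x y - a)^2 = y^2"
proof -
  have "(dcoord a x y)^2 = (2*a^2*x^2 + 2*a^2*y^2 + 2*x^2*y^2 - a^4 - x^4 - y^4) / (2*a)^2"
    unfolding dcoord_def power_divide using tri by simp
  moreover have "zcoord a x y - a = (x^2 - y^2 - a^2) / (2*a)"
    unfolding zcoord_def using a by (simp add: field_simps power2_eq_square)
  ultimately have "(dcoord a x y)^2 + (zcoord a x y - a)^2 =
     ((2*a^2*x^2 + 2*a^2*y^2 + 2*x^2*y^2 - a^4 - x^4 - y^4) + (x^2 - y^2 - a^2)^2) / (2*a)^2"
    by (simp add: power_divide add_divide_distrib)
  also have "(2*a^2*x^2 + 2*a^2*y^2 + 2*x^2*y^2 - a^4 - x^4 - y^4) + (x^2 - y^2 - a^2)^2 = (2*a)^2 * y^2"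
    by (simp add: power2_eq_square power4_eq_xxxx algebra_simps)
  finally show ?thesis using a by simp
qed

lemma branch_val:
  fixes a x y u v :: real
  assumes a: "a > 0" and tri: "2*a^2*x^2 + 2*a^2*y^2 + 2*x^2*y^2 - a^4 - x^4 - y^4 \<ge> 0"
    and uv: "u^2 = v^2 * y^2"
  shows "sqrt (u^2 - v^2 * (dcoord a x y)^2) = \<bar>v * (zcoord a x y - a)\<bar>"
proof -
  have "u^2 - v^2 * (dcoord a x y)^2 = (v * (zcoord a x y - a))^2"
  proof -
    have "u^2 = v^2 * ((dcoord a x y)^2 + (zcoord a x y - a)^2)"
      using dz_identity[OF a tri] uv by simp
    thus ?thesis by (simp add: power_mult_distrib distrib_left)
  qed
  thus ?thesis by simp
qed

lemma S2_zero: "S2 = 0" by (simp add: S2_def zero_prod_def)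

lemma sgn_abs_id: "sgn (x::real) * \<bar>x\<bar> = x" "\<bar>x\<bar> * sgn x = x"
  by (simp_all add: sgn_mult_abs abs_mult_sgn)

definition HH :: "real \<Rightarrow> real \<Rightarrow> real^3^3" where
  "HH a b = vector [vector [1,0,0], vector [0,1,0], vector [0, 2/b, 1 - (a+b)/b]]"

lemma HH_mult: "HH a b *v X = vector [X$1, X$2, (2/b)*X$2 + (1-(a+b)/b)*X$3]"
  by (simp add: HH_def vec_eq_iff forall_3 matrix_vector_mult_def sum_3)

lemma HH_inv:
  assumes "a \<noteq> 0" "b \<noteq> 0" shows "invertible (HH a b)"
proof -
  have 1: "HH a b ** HH b a = mat 1" "HH b a ** HH a b = mat 1"
    using assms by (simp_all add: HH_def vec_eq_iff forall_3 matrix_matrix_mult_def sum_3 mat_def field_simps)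
  thus ?thesis unfolding invertible_def by blast
qed

theorem mainTheorem2:
  fixes a b :: real and p j :: nat and s t u v :: "nat \<Rightarrow> real"
  assumes a_pos: "a > 0" and b_nz: "b \<noteq> 0"
    and j_range: "j \<in> {1..p}"
    and pos: "\<And>i. i \<le> p \<Longrightarrow> s i > 0 \<and> t i > 0 \<and> u i > 0 \<and> v i \<noteq> 0"
    and tri: "\<And>i. i \<le> p \<Longrightarrow>
       2*a^2*(s i)^2 + 2*a^2*(t i)^2 + 2*(s i)^2*(t i)^2 - a^4 - (s i)^4 - (t i)^4 \<ge> 0"
    and b_root: "(fst (Bpt a (s 0) (t 0) (v 0)))^2
                 + (snd (Bpt a (s 0) (t 0) (v 0)) - b)^2 = (u 0)^2"
  shows
   "((\<exists>e::real. (e = 1 \<or> e = -1) \<and> v j = v 0 \<and> v 0 = e * u 0 / t 0)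
      \<and> u j = u 0 * t j / t 0
      \<and> b = bbranch a (s 0) (t 0) (u 0) (v 0) (- sgn (v 0 * (zcoord a (s 0) (t 0) - a)))
     \<longrightarrow> (\<exists>r. central_scaling S2 r (S1 a) = S3 b
              \<and> central_scaling S2 r (Apt a (s 0) (t 0)) = Bpt a (s 0) (t 0) (v 0)
              \<and> central_scaling S2 r (Apt a (s j) (t j)) = Bpt a (s j) (t j) (v j)))
   \<and>
    ((\<exists>e::real. (e = 1 \<or> e = -1)
        \<and> v 0 = - e * u 0 / t 0
        \<and> v j = - e * u 0 * ((s 0)^2 - (t 0)^2) / (t 0 * ((s j)^2 - (t j)^2))
        \<and> u j = sqrt (t 0 * v j * ((s j)^2 * t 0 * v j + e * (s 0)^2 * u 0 - e * (t 0)^2 * u 0)) / t 0)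
      \<and> b = bbranch a (s 0) (t 0) (u 0) (v 0) (sgn (v 0 * (zcoord a (s 0) (t 0) - a)))
     \<longrightarrow> (\<exists>H. perspective_collineation H (hom S2) (vector [0, 1, - (a + b) / 2])
              \<and> coll_maps H (S1 a) (S3 b)
              \<and> coll_maps H (Apt a (s 0) (t 0)) (Bpt a (s 0) (t 0) (v 0))
              \<and> coll_maps H (Apt a (s j) (t j)) (Bpt a (s j) (t j) (v j))))
   \<and>
    (v j = v 0
      \<and> u j = sqrt ((s j)^2 * (v 0)^2 - (s 0)^2 * (v 0)^2 + (u 0)^2)
      \<and> t j = sqrt ((s j)^2 - (s 0)^2 + (t 0)^2)
     \<longrightarrow> Apt a (s j) (t j) \<in> hline (snd (Apt a (s 0) (t 0)))
       \<and> Bpt a (s j) (t j) (v j) \<in> hline (snd (Bpt a (s 0) (t 0) (v 0)))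
       \<and> (\<exists>\<sigma>. central_perspectivity S2 (hline (snd (Apt a (s 0) (t 0))))
                  (hline (snd (Bpt a (s 0) (t 0) (v 0)))) \<sigma>
              \<and> \<sigma> (Apt a (s 0) (t 0)) = Bpt a (s 0) (t 0) (v 0)
              \<and> \<sigma> (Apt a (s j) (t j)) = Bpt a (s j) (t j) (v j)))"
proof -
  have p0: "s 0 > 0 \<and> t 0 > 0 \<and> u 0 > 0 \<and> v 0 \<noteq> 0" using pos by simp
  have pj: "s j > 0 \<and> t j > 0 \<and> u j > 0 \<and> v j \<noteq> 0" using pos j_range by simp
  have tri0: "2*a^2*(s 0)^2 + 2*a^2*(t 0)^2 + 2*(s 0)^2*(t 0)^2 - a^4 - (s 0)^4 - (t 0)^4 \<ge> 0"
    using tri by simp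
  have uvt: "(u 0)^2 = (v 0)^2 * (t 0)^2" if "v 0 = e * u 0 / t 0" "e = 1 \<or> e = -1" for e
  proof -
    have "t 0 * v 0 = e * u 0" using that p0 by (auto simp: field_simps)
    hence "(t 0 * v 0)^2 = (u 0)^2" using that(2) by auto
    thus ?thesis by (simp add: power_mult_distrib mult.commute)
  qed
  show ?thesis
  proof (intro conjI impI)
    assume h: "(\<exists>e::real. (e = 1 \<or> e = -1) \<and> v j = v 0 \<and> v 0 = e * u 0 / t 0)
      \<and> u j = u 0 * t j / t 0
      \<and> b = bbranch a (s 0) (t 0) (u 0) (v 0) (- sgn (v 0 * (zcoord a (s 0) (t 0) - a)))"
    then obtain e where e: "e = 1 \<or> e = -1" "v j = v 0" "v 0 = e * u 0 / t 0" by blast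
    have b: "b = v 0 * a"
      using h branch_val[OF a_pos tri0 uvt[OF e(3) e(1)]] unfolding bbranch_def
      by (simp add: sgn_abs_id algebra_simps)
    show "\<exists>r. central_scaling S2 r (S1 a) = S3 b
              \<and> central_scaling S2 r (Apt a (s 0) (t 0)) = Bpt a (s 0) (t 0) (v 0)
              \<and> central_scaling S2 r (Apt a (s j) (t j)) = Bpt a (s j) (t j) (v j)"
      by (rule exI[of _ "v 0"]) (simp add: central_scaling_def S2_zero S1_def S3_def Bpt_def b e(2) mult.commute)
  next
    assume h: "(\<exists>e::real. (e = 1 \<or> e = -1)
        \<and> v 0 = - e * u 0 / t 0
        \<and> v j = - e * u 0 * ((s 0)^2 - (t 0)^2) / (t 0 * ((s j)^2 - (t j)^2))
        \<and> u j = sqrt (t 0 * v j * ((s j)^2 * t 0 * v j + e * (s 0)^2 * u 0 - e * (t 0)^2 * u 0)) / t 0)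
      \<and> b = bbranch a (s 0) (t 0) (u 0) (v 0) (sgn (v 0 * (zcoord a (s 0) (t 0) - a)))"
    then obtain e where e: "e = 1 \<or> e = -1" "v 0 = - e * u 0 / t 0"
      "v j = - e * u 0 * ((s 0)^2 - (t 0)^2) / (t 0 * ((s j)^2 - (t j)^2))" by blast
    have e2: "v 0 = (-e) * u 0 / t 0" "-e = 1 \<or> -e = -1" using e by auto
    have b: "b = v 0 * (2 * zcoord a (s 0) (t 0) - a)"
      using h branch_val[OF a_pos tri0 uvt[OF e2]] unfolding bbranch_def
      by (simp add: sgn_abs_id algebra_simps)
    have nz: "(s j)^2 - (t j)^2 \<noteq> 0" using e(3) pj by auto
    have vj: "v j * ((s j)^2 - (t j)^2) = v 0 * ((s 0)^2 - (t 0)^2)"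
    proof -
      have "v j * ((s j)^2 - (t j)^2) = - e * u 0 * ((s 0)^2 - (t 0)^2) / t 0"
        using e(3) nz p0 by (simp add: field_simps)
      also have "\<dots> = v 0 * ((s 0)^2 - (t 0)^2)" using e(2) by simp
      finally show ?thesis .
    qed
    have z2: "2 * zcoord a s' t' - a = (s'^2 - t'^2) / a" for s' t'
      unfolding zcoord_def using a_pos by (simp add: field_simps power2_eq_square)
    have b0: "v 0 * (2 * zcoord a (s 0) (t 0) - a) = b" using b by simp
    have bj: "v j * (2 * zcoord a (s j) (t j) - a) = b" using b vj unfolding z2 by simp
    have cm: "coll_maps (HH a b) (Apt a (s') (t')) (Bpt a (s') (t') v')"
      if "v' * (2 * zcoord a s' t' - a) = b" "v' \<noteq> 0" for s' t' v'
      unfolding coll_maps_def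
      apply (rule exI[of _ "1/v'"])
      using that b_nz by (simp add: HH_mult hom_def Apt_def Bpt_def vec_eq_iff forall_3 field_simps)
    show "\<exists>H. perspective_collineation H (hom S2) (vector [0, 1, - (a + b) / 2])
              \<and> coll_maps H (S1 a) (S3 b)
              \<and> coll_maps H (Apt a (s 0) (t 0)) (Bpt a (s 0) (t 0) (v 0))
              \<and> coll_maps H (Apt a (s j) (t j)) (Bpt a (s j) (t j) (v j))"
    proof (intro exI[of _ "HH a b"] conjI)
      show "perspective_collineation (HH a b) (hom S2) (vector [0, 1, - (a + b) / 2])"
        unfolding perspective_collineation_def
      proof (intro conjI allI impI)
        show "invertible (HH a b)" using HH_inv a_pos b_nz by simp
      next
        fix X :: "real^3" assume "X \<noteq> 0 \<and> vector [0, 1, - (a + b) / 2] \<bullet> X = 0"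
        hence "X$2 = (a+b)/2 * X$3" by (simp add: inner_vec_def sum_3 field_simps)
        hence "HH a b *v X = 1 *\<^sub>R X"
          using b_nz by (simp add: HH_mult vec_eq_iff forall_3 field_simps)
        thus "\<exists>c. c \<noteq> 0 \<and> HH a b *v X = c *\<^sub>R X" by (intro exI[of _ 1]) simp
      next
        fix l X :: "real^3"
        assume "l \<noteq> 0 \<and> l \<bullet> hom S2 = 0" "l \<bullet> X = 0"
        thus "l \<bullet> (HH a b *v X) = 0"
          by (simp add: HH_mult hom_def S2_def inner_vec_def sum_3)
      qed
    next
      show "coll_maps (HH a b) (S1 a) (S3 b)"
        unfolding coll_maps_def
        apply (rule exI[of _ "a/b"])
        using a_pos b_nz by (simp add: HH_mult hom_def S1_def S3_def vec_eq_iff forall_3 field_simps)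
    next
      show "coll_maps (HH a b) (Apt a (s 0) (t 0)) (Bpt a (s 0) (t 0) (v 0))"
        using cm b0 p0 by blast
    next
      show "coll_maps (HH a b) (Apt a (s j) (t j)) (Bpt a (s j) (t j) (v j))"
        using cm bj pj by blast
    qed
  next
    assume h: "v j = v 0
      \<and> u j = sqrt ((s j)^2 * (v 0)^2 - (s 0)^2 * (v 0)^2 + (u 0)^2)
      \<and> t j = sqrt ((s j)^2 - (s 0)^2 + (t 0)^2)"
    have "(s j)^2 - (s 0)^2 + (t 0)^2 \<ge> 0"
    proof (rule ccontr)
      assume "\<not> ?thesis"
      hence "t j < 0" using h by simp
      thus False using pj by simp
    qed
    hence "(t j)^2 = (s j)^2 - (s 0)^2 + (t 0)^2" using h by simp
    hence zz: "zcoord a (s j) (t j) = zcoord a (s 0) (t 0)" unfolding zcoord_def by simp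
    show "Apt a (s j) (t j) \<in> hline (snd (Apt a (s 0) (t 0)))"
      by (simp add: hline_def Apt_def zz)
    show "Bpt a (s j) (t j) (v j) \<in> hline (snd (Bpt a (s 0) (t 0) (v 0)))"
      using h zz by (simp add: hline_def Bpt_def Apt_def del: real_sqrt_eq_iff)
    have bij: "bij_betw (\<lambda>P. v 0 *\<^sub>R P) (hline z) (hline (v 0 * z))" for z
    proof (rule bij_betwI[where g = "\<lambda>P. (1 / v 0) *\<^sub>R P"])
      show "(\<lambda>P. v 0 *\<^sub>R P) \<in> hline z \<rightarrow> hline (v 0 * z)" by (auto simp: hline_def)
      show "(\<lambda>P. (1 / v 0) *\<^sub>R P) \<in> hline (v 0 * z) \<rightarrow> hline z" using p0 by (auto simp: hline_def)
      show "\<And>x. x \<in> hline z \<Longrightarrow> (1 / v 0) *\<^sub>R v 0 *\<^sub>R x = x" using p0 by simp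
      show "\<And>y. y \<in> hline (v 0 * z) \<Longrightarrow> v 0 *\<^sub>R (1 / v 0) *\<^sub>R y = y" using p0 by simp
    qed
    have col: "collinear {S2, P, v 0 *\<^sub>R P}" for P :: pt
      unfolding S2_zero collinear_lemma by blast
    show "\<exists>\<sigma>. central_perspectivity S2 (hline (snd (Apt a (s 0) (t 0))))
                  (hline (snd (Bpt a (s 0) (t 0) (v 0)))) \<sigma>
              \<and> \<sigma> (Apt a (s 0) (t 0)) = Bpt a (s 0) (t 0) (v 0)
              \<and> \<sigma> (Apt a (s j) (t j)) = Bpt a (s j) (t j) (v j)"
      apply (rule exI[of _ "\<lambda>P. v 0 *\<^sub>R P"])
      using bij[of "snd (Apt a (s 0) (t 0))"] col h
      by (simp add: central_perspectivity_def Bpt_def Apt_def)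
  qed
qed

end
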